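(* Let $(b,c)$ be a connected graph over a countable set $X$ with Schrödinger operator $H=H_{b,c}$, and fix $x_0\in X$. Then $\mathcal{S}^+_1=\{f\in\mathcal{S}^+: f(x_0)=1\}$ is compact with respect to the product topology on $\mathbb{R}^X$.
   Context: A graph over $X$ is $(b,c)$ with $b:X\times X\to[0,\infty)$, $c:X\to\mathbb{R}$, $\sum_yb(x,y)<\infty$ for all $x$ ($b$ need not be symmetric); connected: any $x,z$ are joined by a finite sequence $y_1,\dots,y_n$ with $b(y_i,y_{i+1})>0$. $H_{b,c}f(x)=\sum_yb(x,y)(f(x)-f(y))+c(x)f(x)$ on $\mathrm{Dom}(H)=\{f:\sum_yb(x,y)|f(y)|<\infty\ \forall x\}$. $\mathcal{S}^+$ is the set of nonnegative, not identically zero $f\in\mathrm{Dom}(H)$ with $Hf\ge0$. *)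

theory Defs
  imports "HOL-Analysis.Analysis"
begin

definition is_graph :: "('a \<Rightarrow> 'a \<Rightarrow> real) \<Rightarrow> ('a \<Rightarrow> real) \<Rightarrow> bool" where
  "is_graph b c \<longleftrightarrow> (\<forall>x y. b x y \<ge> 0) \<and> (\<forall>x. (\<lambda>y. b x y) summable_on UNIV)"

definition graph_connected :: "('a \<Rightarrow> 'a \<Rightarrow> real) \<Rightarrow> bool" where
  "graph_connected b \<longleftrightarrow> (\<forall>x z. (\<lambda>u v. b u v > 0)\<^sup>*\<^sup>* x z)"

definition dom_H :: "('a \<Rightarrow> 'a \<Rightarrow> real) \<Rightarrow> ('a \<Rightarrow> real) set" where
  "dom_H b = {f. \<forall>x. (\<lambda>y. b x y * \<bar>f y\<bar>) summable_on UNIV}"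

definition schroedinger_op :: "('a \<Rightarrow> 'a \<Rightarrow> real) \<Rightarrow> ('a \<Rightarrow> real) \<Rightarrow> ('a \<Rightarrow> real) \<Rightarrow> 'a \<Rightarrow> real" where
  "schroedinger_op b c f x = (\<Sum>\<^sub>\<infinity>y. b x y * (f x - f y)) + c x * f x"

definition S_plus :: "('a \<Rightarrow> 'a \<Rightarrow> real) \<Rightarrow> ('a \<Rightarrow> real) \<Rightarrow> ('a \<Rightarrow> real) set" where
  "S_plus b c = {f. (\<forall>x. f x \<ge> 0) \<and> (\<exists>x. f x \<noteq> 0) \<and> f \<in> dom_H b
                   \<and> (\<forall>x. schroedinger_op b c f x \<ge> 0)}"

end

theory Submission
  imports Defs
begin

lemma H_expand:
  fixes b :: "'a \<Rightarrow> 'a \<Rightarrow> real"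
  assumes s1: "(\<lambda>y. b x y) summable_on UNIV" and s2: "(\<lambda>y. b x y * f y) summable_on UNIV"
  shows "schroedinger_op b c f x = (\<Sum>\<^sub>\<infinity>y. b x y) * f x - (\<Sum>\<^sub>\<infinity>y. b x y * f y) + c x * f x"
proof -
  have e: "(\<lambda>y. b x y * (f x - f y)) = (\<lambda>y. b x y * f x + (- (b x y * f y)))"
    by (auto simp: algebra_simps)
  have a1: "(\<lambda>y. b x y * f x) summable_on UNIV" using s1 by (rule summable_on_cmult_left)
  have a2: "(\<lambda>y. - (b x y * f y)) summable_on UNIV" using s2 by (simp add: summable_on_uminus)
  have "(\<Sum>\<^sub>\<infinity>y. b x y * (f x - f y)) = (\<Sum>\<^sub>\<infinity>y. b x y * f x) + (\<Sum>\<^sub>\<infinity>y. - (b x y * f y))"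
    unfolding e by (rule infsum_add[OF a1 a2])
  also have "\<dots> = (\<Sum>\<^sub>\<infinity>y. b x y) * f x - (\<Sum>\<^sub>\<infinity>y. b x y * f y)"
    using s1 by (simp add: infsum_cmult_left infsum_uminus)
  finally show ?thesis unfolding schroedinger_op_def by simp
qed

theorem corollary2:
  fixes b :: "'a::countable \<Rightarrow> 'a \<Rightarrow> real" and c :: "'a \<Rightarrow> real" and x0 :: 'a
  assumes "is_graph b c" and "graph_connected b"
  shows "compact {f \<in> S_plus b c. f x0 = 1}"
proof -
  have bnn: "\<And>x y. b x y \<ge> 0" and bs: "\<And>x. (\<lambda>y. b x y) summable_on UNIV"
    using assms(1) unfolding is_graph_def by auto
  define d where "d x = (\<Sum>\<^sub>\<infinity>y. b x y)" for x
  define T where "T = {f :: 'a \<Rightarrow> real. f x0 = 1 \<and> (\<forall>x. f x \<ge> 0) \<and>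
      (\<forall>x. \<forall>F. finite F \<longrightarrow> (\<Sum>y\<in>F. b x y * f y) \<le> (d x + c x) * f x)}"
  have eq: "{f \<in> S_plus b c. f x0 = 1} = T"
  proof (intro set_eqI iffI)
    fix f assume "f \<in> {f \<in> S_plus b c. f x0 = 1}"
    then have f0: "f x0 = 1" and fnn: "\<And>x. f x \<ge> 0" and fd: "f \<in> dom_H b"
      and fH: "\<And>x. schroedinger_op b c f x \<ge> 0"
      unfolding S_plus_def by auto
    have sm: "(\<lambda>y. b x y * f y) summable_on UNIV" for x
      using fd fnn unfolding dom_H_def by (simp add: abs_of_nonneg)
    have "(\<Sum>y\<in>F. b x y * f y) \<le> (d x + c x) * f x" if "finite F" for x F
    proof -
      have "(\<Sum>y\<in>F. b x y * f y) \<le> (\<Sum>\<^sub>\<infinity>y. b x y * f y)"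
        by (rule finite_sum_le_infsum[OF sm that]) (auto intro: mult_nonneg_nonneg bnn fnn)
      also have "\<dots> \<le> (d x + c x) * f x"
        using fH[of x] H_expand[of b x f c, OF bs sm] unfolding d_def by (simp add: algebra_simps)
      finally show ?thesis .
    qed
    then show "f \<in> T" unfolding T_def using f0 fnn by auto
  next
    fix f assume "f \<in> T"
    then have f0: "f x0 = 1" and fnn: "\<And>x. f x \<ge> 0"
      and fF: "\<And>x F. finite F \<Longrightarrow> (\<Sum>y\<in>F. b x y * f y) \<le> (d x + c x) * f x"
      unfolding T_def by auto
    have sm: "(\<lambda>y. b x y * f y) summable_on UNIV" for x
    proof (rule nonneg_bdd_above_summable_on)
      show "\<And>y. y \<in> UNIV \<Longrightarrow> b x y * f y \<ge> 0" by (auto intro: mult_nonneg_nonneg bnn fnn)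
      show "bdd_above (sum (\<lambda>y. b x y * f y) ` {F. F \<subseteq> UNIV \<and> finite F})"
        using fF by (auto intro!: bdd_aboveI[where M="(d x + c x) * f x"])
    qed
    have "f \<in> dom_H b" unfolding dom_H_def using sm fnn by (simp add: abs_of_nonneg)
    moreover have "schroedinger_op b c f x \<ge> 0" for x
    proof -
      have "(\<Sum>\<^sub>\<infinity>y. b x y * f y) \<le> (d x + c x) * f x"
        by (rule infsum_le_finite_sums[OF sm]) (use fF in auto)
      then show ?thesis
        using H_expand[of b x f c, OF bs sm] unfolding d_def by (simp add: algebra_simps)
    qed
    moreover have "\<exists>x. f x \<noteq> 0" using f0 by (intro exI[of _ x0]) simp
    ultimately show "f \<in> {f \<in> S_plus b c. f x0 = 1}"
      unfolding S_plus_def using f0 fnn by auto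
  qed
  define M where "M x y = max 0 ((d x + c x) / b x y)" for x y
  have stepM: "f y \<le> M x y * f x" if "f \<in> T" "b x y > 0" for f x y
  proof -
    have "(\<Sum>y\<in>{y}. b x y * f y) \<le> (d x + c x) * f x" using that(1) unfolding T_def by blast
    then have "b x y * f y \<le> (d x + c x) * f x" by simp
    then have "f y \<le> ((d x + c x) / b x y) * f x" using that(2)
      by (simp add: field_simps mult.commute)
    also have "\<dots> \<le> M x y * f x"
    proof (rule mult_right_mono)
      show "(d x + c x) / b x y \<le> M x y" unfolding M_def by simp
      show "0 \<le> f x" using that(1) unfolding T_def by blast
    qed
    finally show ?thesis .
  qed
  have bound: "\<exists>C. \<forall>f\<in>T. f z \<le> C" for z
  proof -
    have "(\<lambda>u v. b u v > 0)\<^sup>*\<^sup>* x0 z" using assms(2) unfolding graph_connected_def by blast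
    then show ?thesis
    proof (induction rule: rtranclp_induct)
      case base
      then show ?case unfolding T_def by auto
    next
      case (step y w)
      then obtain C where C: "\<forall>f\<in>T. f y \<le> C" by blast
      have "\<forall>f\<in>T. f w \<le> M y w * C"
      proof
        fix f assume "f \<in> T"
        have "f w \<le> M y w * f y" using \<open>f \<in> T\<close> step(2) by (rule stepM)
        also have "\<dots> \<le> M y w * C" using C \<open>f \<in> T\<close> unfolding M_def
          by (auto intro: mult_left_mono)
        finally show "f w \<le> M y w * C" .
      qed
      then show ?case by blast
    qed
  qed
  then obtain C where C: "\<And>z f. f \<in> T \<Longrightarrow> f z \<le> C z" by metis
  have sub: "T \<subseteq> PiE UNIV (\<lambda>z. {0..C z})"
    using C unfolding T_def PiE_UNIV_domain by auto
  have "compactin (product_topology (\<lambda>_. euclidean) UNIV) (PiE UNIV (\<lambda>z. {0..C z::real}))"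
    by (simp add: compactin_PiE)
  then have cK: "compact (PiE UNIV (\<lambda>z. {0..C z::real}))"
    by (simp add: euclidean_product_topology compactin_euclidean_iff)
  have cont: "continuous_on UNIV (\<lambda>f::'a\<Rightarrow>real. \<Sum>y\<in>F. b x y * f y)" for x F
    by (intro continuous_intros continuous_on_product_coordinates)
  have cont2: "continuous_on UNIV (\<lambda>f::'a\<Rightarrow>real. (d x + c x) * f x)" for x
    by (intro continuous_intros continuous_on_product_coordinates)
  have cl: "closed T"
  proof -
    have "T = {f. f x0 = 1} \<inter> (\<Inter>x. {f. f x \<ge> 0}) \<inter>
      (\<Inter>x. \<Inter>F\<in>{F. finite F}. {f. (\<Sum>y\<in>F. b x y * f y) \<le> (d x + c x) * f x})"
      unfolding T_def by auto
    also have "closed \<dots>"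
      by (intro closed_Int closed_INT ballI closed_Collect_le closed_Collect_eq cont cont2
          continuous_on_product_coordinates continuous_on_const)
    finally show ?thesis .
  qed
  have "compact (PiE UNIV (\<lambda>z. {0..C z}) \<inter> T)"
    by (rule compact_Int_closed[OF cK cl])
  also have "PiE UNIV (\<lambda>z. {0..C z}) \<inter> T = T" using sub by blast
  finally show ?thesis using eq by simp
qed

end
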